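(* Let $(a_n)_{n\ge 1}$ be a sequence of strictly positive real numbers with $\sum_{n\ge1}(1+n^2)^5a_n^2<\infty$. Let $H=\mathbb{R}\times l^2\times l^2$ and let $F:H\to H$ be defined, for $y=(x,(u_n)_{n\ge1},(v_n)_{n\ge1})\in H$, by $$F(y)=\Big(\sum_{n\ge1} n a_n^{1/2}\big(\sin(nx)u_n+\cos(nx)v_n\big),\ \big(a_n^{1/2}\cos(nx)\big)_{n\ge1},\ \big(-a_n^{1/2}\sin(nx)\big)_{n\ge1}\Big).$$ Let $W$ be a cylindrical Wiener process on $H$ and $\sigma$ the projection onto the first coordinate. For $N\ge1$ define $\Pi_N:H\to H$ by $\Pi_N(x,(u_n)_n,(v_n)_n)=(x,(u_1,\dots,u_N,0,0,\dots),(v_1,\dots,v_N,0,0,\dots))$. Fix $y\in H$, let $Y$ be the strong solution of $dY_t=F(Y_t)\,dt+\sigma\,dW_t$, $Y_0=y$, and let $Y^{(N)}$ be the strong solution of the (finite-dimensional) equation $dY^{(N)}_t=\Pi_N F(Y^{(N)}_t)\,dt+\sigma\,dW_t$, $Y^{(N)}_0=\Pi_N y$, driven by the same $W$. Then for all $T>0$ and all $\omega\in\Omega$, $$\lim_{N\to\infty}\sup_{0\le t\le T}\|Y^{(N)}(t)-Y(t)\|_H^2=0.$$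
   Context: $H=\mathbb{R}\times l^2\times l^2$ is the Hilbert space with norm $\|y\|_H^2=|x|^2+\|(u_n)_n\|_{l^2}^2+\|(v_n)_n\|_{l^2}^2$. $\sigma W_t=(\beta_t,0,0)$ with $\beta$ a standard one-dimensional Brownian motion. The equation for $Y^{(N)}$ lives in $\mathbb{R}\times\mathbb{R}^N\times\mathbb{R}^N$ (identified with a subspace of $H$) and has a unique strong solution. *)

theory Defs
  imports "HOL-Analysis.Analysis"
begin

text \<open>Elements of H = R x l2 x l2 are represented as triples (x, u, v) with
  u, v :: nat => real, where the index 0 is unused (forced to be 0) so that
  u n is the paper's u_n for n >= 1.\<close>

type_synonym hpt = "real \<times> (nat \<Rightarrow> real) \<times> (nat \<Rightarrow> real)"

definition inH :: "hpt \<Rightarrow> bool" where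
  "inH y = (case y of (x, u, v) \<Rightarrow>
      u 0 = 0 \<and> v 0 = 0 \<and> summable (\<lambda>n. (u n)\<^sup>2) \<and> summable (\<lambda>n. (v n)\<^sup>2))"

definition hnorm2 :: "hpt \<Rightarrow> real" where
  "hnorm2 y = (case y of (x, u, v) \<Rightarrow> x\<^sup>2 + (\<Sum>n. (u n)\<^sup>2) + (\<Sum>n. (v n)\<^sup>2))"

definition hsub :: "hpt \<Rightarrow> hpt \<Rightarrow> hpt" where
  "hsub y z = (fst y - fst z, (\<lambda>n. fst (snd y) n - fst (snd z) n),
                              (\<lambda>n. snd (snd y) n - snd (snd z) n))"

definition Fdrift :: "(nat \<Rightarrow> real) \<Rightarrow> hpt \<Rightarrow> hpt" where
  "Fdrift a y = (case y of (x, u, v) \<Rightarrow>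
     ((\<Sum>n. real n * sqrt (a n) * (sin (real n * x) * u n + cos (real n * x) * v n)),
      (\<lambda>n. if n = 0 then 0 else sqrt (a n) * cos (real n * x)),
      (\<lambda>n. if n = 0 then 0 else - sqrt (a n) * sin (real n * x))))"

definition PiN :: "nat \<Rightarrow> hpt \<Rightarrow> hpt" where
  "PiN N y = (case y of (x, u, v) \<Rightarrow>
     (x, (\<lambda>n. if n \<le> N then u n else 0), (\<lambda>n. if n \<le> N then v n else 0)))"

text \<open>Pathwise strong solution on [0,\<infinity>) of dY = G(Y) dt + (d beta, 0, 0), Y 0 = y0,
  for a fixed continuous driving path beta with beta 0 = 0. The H-valued
  integral equation is written componentwise.\<close>
definition is_solution :: "(hpt \<Rightarrow> hpt) \<Rightarrow> (real \<Rightarrow> real) \<Rightarrow> hpt \<Rightarrow> (real \<Rightarrow> hpt) \<Rightarrow> bool" where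
  "is_solution G beta y0 Y \<longleftrightarrow>
     (\<forall>t\<ge>0. inH (Y t)) \<and>
     (\<forall>t0\<ge>0. ((\<lambda>t. hnorm2 (hsub (Y t) (Y t0))) \<longlongrightarrow> 0) (at t0 within {0..})) \<and>
     (\<forall>t\<ge>0.
        fst (Y t) = fst y0 + integral {0..t} (\<lambda>s. fst (G (Y s))) + beta t \<and>
        (\<forall>n. fst (snd (Y t)) n = fst (snd y0) n + integral {0..t} (\<lambda>s. fst (snd (G (Y s))) n)) \<and>
        (\<forall>n. snd (snd (Y t)) n = snd (snd y0) n + integral {0..t} (\<lambda>s. snd (snd (G (Y s))) n)))"

end

theory Submission
  imports Defs
begin


definition sg :: "(nat \<Rightarrow> real) \<Rightarrow> nat \<Rightarrow> real" where
  "sg a n = (if n = 0 then 0 else sqrt (a n))"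

definition term1 :: "(nat \<Rightarrow> real) \<Rightarrow> hpt \<Rightarrow> nat \<Rightarrow> real" where
  "term1 a z n = real n * sg a n * (sin (real n * fst z) * fst (snd z) n + cos (real n * fst z) * snd (snd z) n)"

definition fx :: "(nat \<Rightarrow> real) \<Rightarrow> hpt \<Rightarrow> real" where
  "fx a z = (\<Sum>n. term1 a z n)"

lemma fst_Fdrift: "fst (Fdrift a z) = fx a z"
proof -
  obtain x u v where z: "z = (x, u, v)" by (cases z) auto
  have "(\<lambda>n. real n * sqrt (a n) * (sin (real n * x) * u n + cos (real n * x) * v n)) = term1 a z"
    by (auto simp: fun_eq_iff term1_def sg_def z)
  then show ?thesis by (simp add: Fdrift_def fx_def z)
qed

lemma u_Fdrift: "fst (snd (Fdrift a z)) n = sg a n * cos (real n * fst z)"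
  by (cases z) (auto simp: Fdrift_def sg_def)

lemma v_Fdrift: "snd (snd (Fdrift a z)) n = - sg a n * sin (real n * fst z)"
  by (cases z) (auto simp: Fdrift_def sg_def)

lemma fst_PiN: "fst (PiN N z) = fst z"
  by (cases z) (auto simp: PiN_def)
lemma u_PiN: "fst (snd (PiN N z)) n = (if n \<le> N then fst (snd z) n else 0)"
  by (cases z) (auto simp: PiN_def)
lemma v_PiN: "snd (snd (PiN N z)) n = (if n \<le> N then snd (snd z) n else 0)"
  by (cases z) (auto simp: PiN_def)

lemma sin_lip: "\<bar>sin (x::real) - sin y\<bar> \<le> \<bar>x - y\<bar>"
proof -
  have s: "\<bar>sin ((x - y) / 2)\<bar> \<le> \<bar>x - y\<bar> / 2" using abs_sin_x_le_abs_x[of "(x-y)/2"] by simp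
  have c: "\<bar>cos ((x + y) / 2)\<bar> \<le> 1" by simp
  have "\<bar>sin ((x - y) / 2)\<bar> * \<bar>cos ((x + y) / 2)\<bar> \<le> \<bar>x - y\<bar> / 2 * 1"
    by (rule mult_mono[OF s c]) auto
  then show ?thesis by (simp add: sin_diff_sin abs_mult)
qed

lemma cos_lip: "\<bar>cos (x::real) - cos y\<bar> \<le> \<bar>x - y\<bar>"
proof -
  have s: "\<bar>sin ((y - x) / 2)\<bar> \<le> \<bar>x - y\<bar> / 2" using abs_sin_x_le_abs_x[of "(y-x)/2"] by (simp add: abs_minus_commute)
  have c: "\<bar>sin ((x + y) / 2)\<bar> \<le> 1" by simp
  have "\<bar>sin ((x + y) / 2)\<bar> * \<bar>sin ((y - x) / 2)\<bar> \<le> 1 * (\<bar>x - y\<bar> / 2)"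
    by (rule mult_mono[OF c s]) auto
  then show ?thesis by (simp add: cos_diff_cos abs_mult)
qed

lemma sin_lipn: "\<bar>sin (real n * x) - sin (real n * y)\<bar> \<le> real n * \<bar>x - y\<bar>"
  using sin_lip[of "real n * x" "real n * y"] by (simp add: right_diff_distrib[symmetric] abs_mult)
lemma cos_lipn: "\<bar>cos (real n * x) - cos (real n * y)\<bar> \<le> real n * \<bar>x - y\<bar>"
  using cos_lip[of "real n * x" "real n * y"] by (simp add: right_diff_distrib[symmetric] abs_mult)

lemma hsub_simps: "fst (hsub y z) = fst y - fst z" "fst (snd (hsub y z)) n = fst (snd y) n - fst (snd z) n"
  "snd (snd (hsub y z)) n = snd (snd y) n - snd (snd z) n"
  by (auto simp: hsub_def)

lemma inH_D: assumes "inH z" shows "summable (\<lambda>n. (fst (snd z) n)\<^sup>2)" "summable (\<lambda>n. (snd (snd z) n)\<^sup>2)"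
  using assms by (cases z; auto simp: inH_def)+

lemma summable_sq_diff:
  assumes "summable (\<lambda>n. (f n)\<^sup>2::real)" "summable (\<lambda>n. (g n)\<^sup>2)"
  shows "summable (\<lambda>n. (f n - g n)\<^sup>2)"
proof (rule summable_comparison_test[where g="\<lambda>n. 2 * (f n)\<^sup>2 + 2 * (g n)\<^sup>2"])
  show "\<exists>N. \<forall>n\<ge>N. norm ((f n - g n)\<^sup>2) \<le> 2 * (f n)\<^sup>2 + 2 * (g n)\<^sup>2"
  proof (intro exI allI impI)
    fix n
    have "0 \<le> (f n + g n)\<^sup>2" by simp
    then have "(f n - g n)\<^sup>2 \<le> 2 * (f n)\<^sup>2 + 2 * (g n)\<^sup>2"
      by (simp add: power2_eq_square algebra_simps)
    then show "norm ((f n - g n)\<^sup>2) \<le> 2 * (f n)\<^sup>2 + 2 * (g n)\<^sup>2"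
      by simp
  qed
  show "summable (\<lambda>n. 2 * (f n)\<^sup>2 + 2 * (g n)\<^sup>2)"
    using assms by (intro summable_add summable_mult) 
qed

lemma hnorm2_sub:
  assumes "inH y" "inH z"
  shows "hnorm2 (hsub y z) = (fst y - fst z)\<^sup>2 + (\<Sum>n. (fst (snd y) n - fst (snd z) n)\<^sup>2)
           + (\<Sum>n. (snd (snd y) n - snd (snd z) n)\<^sup>2)"
    and "summable (\<lambda>n. (fst (snd y) n - fst (snd z) n)\<^sup>2)"
    and "summable (\<lambda>n. (snd (snd y) n - snd (snd z) n)\<^sup>2)"
    and "(fst y - fst z)\<^sup>2 \<le> hnorm2 (hsub y z)"
    and "0 \<le> hnorm2 (hsub y z)"
proof -
  show 1: "hnorm2 (hsub y z) = (fst y - fst z)\<^sup>2 + (\<Sum>n. (fst (snd y) n - fst (snd z) n)\<^sup>2)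
           + (\<Sum>n. (snd (snd y) n - snd (snd z) n)\<^sup>2)"
    by (simp add: hnorm2_def hsub_def)
  show 2: "summable (\<lambda>n. (fst (snd y) n - fst (snd z) n)\<^sup>2)"
    using assms by (intro summable_sq_diff inH_D)
  show 3: "summable (\<lambda>n. (snd (snd y) n - snd (snd z) n)\<^sup>2)"
    using assms by (intro summable_sq_diff inH_D)
  have "0 \<le> (\<Sum>n. (fst (snd y) n - fst (snd z) n)\<^sup>2)" "0 \<le> (\<Sum>n. (snd (snd y) n - snd (snd z) n)\<^sup>2)"
    using 2 3 by (auto intro!: suminf_nonneg)
  then show "(fst y - fst z)\<^sup>2 \<le> hnorm2 (hsub y z)" "0 \<le> hnorm2 (hsub y z)" unfolding 1 by auto
qed



lemma sol_contX:
  assumes sol: "is_solution G beta y0 Z"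
  shows "continuous_on {0..} (\<lambda>t. fst (Z t))"
  unfolding continuous_on_def
proof
  fix t0 :: real assume t0: "t0 \<in> {0..}"
  have lim: "((\<lambda>t. hnorm2 (hsub (Z t) (Z t0))) \<longlongrightarrow> 0) (at t0 within {0..})"
    using sol t0 by (auto simp: is_solution_def)
  have ev: "\<forall>\<^sub>F t in at t0 within {0..}. norm (fst (Z t) - fst (Z t0)) \<le> sqrt (hnorm2 (hsub (Z t) (Z t0)))"
    unfolding eventually_at_filter
  proof (rule always_eventually, intro allI impI)
    fix t :: real assume "t \<in> {0..}"
    then have "inH (Z t)" "inH (Z t0)" using sol t0 by (auto simp: is_solution_def)
    from hnorm2_sub(4)[OF this] show "norm (fst (Z t) - fst (Z t0)) \<le> sqrt (hnorm2 (hsub (Z t) (Z t0)))"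
      by (simp add: real_le_rsqrt)
  qed
  have "((\<lambda>t. sqrt (hnorm2 (hsub (Z t) (Z t0)))) \<longlongrightarrow> 0) (at t0 within {0..})"
    using tendsto_real_sqrt[OF lim] by simp
  from Lim_null_comparison[OF ev this]
  have "((\<lambda>t. fst (Z t) - fst (Z t0)) \<longlongrightarrow> 0) (at t0 within {0..})" .
  then show "((\<lambda>t. fst (Z t)) \<longlongrightarrow> fst (Z t0)) (at t0 within {0..})"
    by (simp add: LIM_zero_iff)
qed



locale solz =
  fixes a :: "nat \<Rightarrow> real" and G :: "hpt \<Rightarrow> hpt" and beta :: "real \<Rightarrow> real"
    and y0 :: hpt and Z :: "real \<Rightarrow> hpt" and M :: "nat \<Rightarrow> bool" and T :: real
  assumes sol: "is_solution G beta y0 Z"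
    and Gx: "\<And>z. fst (G z) = fx a z"
    and Gu: "\<And>z n. fst (snd (G z)) n = (if M n then sg a n * cos (real n * fst z) else 0)"
    and Gv: "\<And>z n. snd (snd (G z)) n = (if M n then - sg a n * sin (real n * fst z) else 0)"
    and sgnn: "\<And>n. 0 \<le> sg a n"
    and Tnn: "0 \<le> T"
    and sumrho: "summable (\<lambda>n. real n * sg a n * (\<bar>fst (snd y0) n\<bar> + \<bar>snd (snd y0) n\<bar> + 2 * sg a n * T))"
begin

definition hU where "hU n s = (if M n then sg a n * cos (real n * fst (Z s)) else 0)"
definition hV where "hV n s = (if M n then - sg a n * sin (real n * fst (Z s)) else 0)"

lemma contX: "continuous_on {0..} (\<lambda>t. fst (Z t))"
  by (rule sol_contX[OF sol])

lemma contX': "S \<subseteq> {0..} \<Longrightarrow> continuous_on S (\<lambda>t. fst (Z t))"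
  using continuous_on_subset[OF contX] by blast

lemma cont_hU: "S \<subseteq> {0..} \<Longrightarrow> continuous_on S (hU n)"
  unfolding hU_def by (cases "M n") (auto intro!: continuous_intros contX')

lemma cont_hV: "S \<subseteq> {0..} \<Longrightarrow> continuous_on S (hV n)"
  unfolding hV_def by (cases "M n") (auto intro!: continuous_intros contX')

lemma int_hU: "0 \<le> s \<Longrightarrow> hU n integrable_on {s..t}"
  by (rule integrable_continuous_interval, rule cont_hU) auto
lemma int_hV: "0 \<le> s \<Longrightarrow> hV n integrable_on {s..t}"
  by (rule integrable_continuous_interval, rule cont_hV) auto

lemma U_eq: "0 \<le> t \<Longrightarrow> fst (snd (Z t)) n = fst (snd y0) n + integral {0..t} (hU n)"
  using sol unfolding is_solution_def hU_def by (simp add: Gu)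
lemma V_eq: "0 \<le> t \<Longrightarrow> snd (snd (Z t)) n = snd (snd y0) n + integral {0..t} (hV n)"
  using sol unfolding is_solution_def hV_def by (simp add: Gv)
lemma X_eq: "0 \<le> t \<Longrightarrow> fst (Z t) = fst y0 + integral {0..t} (\<lambda>s. fx a (Z s)) + beta t"
  using sol unfolding is_solution_def by (simp add: Gx)

lemma int_bound:
  fixes f :: "real \<Rightarrow> real"
  assumes "0 \<le> t" "f integrable_on {0..t}" "\<And>s. s \<in> {0..t} \<Longrightarrow> \<bar>f s\<bar> \<le> c"
  shows "\<bar>integral {0..t} f\<bar> \<le> c * t"
proof -
  have "norm (integral {0..t} f) \<le> integral {0..t} (\<lambda>_. c)"
    using assms by (intro integral_norm_bound_integral) auto
  then show ?thesis using assms(1) by (simp add: mult.commute)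
qed

lemma U_bound: "0 \<le> t \<Longrightarrow> \<bar>fst (snd (Z t)) n\<bar> \<le> \<bar>fst (snd y0) n\<bar> + sg a n * t"
proof -
  assume t: "0 \<le> t"
  have "\<bar>integral {0..t} (hU n)\<bar> \<le> sg a n * t"
    using t int_hU sgnn[of n]
    by (intro int_bound) (auto simp: hU_def abs_mult intro: mult_left_le)
  then show ?thesis using U_eq[OF t, of n] by linarith
qed

lemma V_bound: "0 \<le> t \<Longrightarrow> \<bar>snd (snd (Z t)) n\<bar> \<le> \<bar>snd (snd y0) n\<bar> + sg a n * t"
proof -
  assume t: "0 \<le> t"
  have "\<bar>integral {0..t} (hV n)\<bar> \<le> sg a n * t"
    using t int_hV sgnn[of n]
    by (intro int_bound) (auto simp: hV_def abs_mult intro: mult_left_le)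
  then show ?thesis using V_eq[OF t, of n] by linarith
qed

lemma U_cont: "continuous_on {0..T} (\<lambda>t. fst (snd (Z t)) n)"
proof -
  have "continuous_on {0..T} (\<lambda>t. fst (snd y0) n + integral {0..t} (hU n))"
    by (intro continuous_intros indefinite_integral_continuous_1 int_hU) auto
  then show ?thesis by (rule continuous_on_eq) (auto simp: U_eq)
qed

lemma V_cont: "continuous_on {0..T} (\<lambda>t. snd (snd (Z t)) n)"
proof -
  have "continuous_on {0..T} (\<lambda>t. snd (snd y0) n + integral {0..t} (hV n))"
    by (intro continuous_intros indefinite_integral_continuous_1 int_hV) auto
  then show ?thesis by (rule continuous_on_eq) (auto simp: V_eq)
qed

definition rho0 where "rho0 n = real n * sg a n * (\<bar>fst (snd y0) n\<bar> + \<bar>snd (snd y0) n\<bar> + 2 * sg a n * T)"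

lemma term_bound:
  assumes s: "s \<in> {0..T}"
  shows "\<bar>term1 a (Z s) n\<bar> \<le> rho0 n"
proof -
  let ?x = "real n * fst (Z s)"
  have s0: "0 \<le> s" "s \<le> T" using s by auto
  have "\<bar>sin ?x * fst (snd (Z s)) n + cos ?x * snd (snd (Z s)) n\<bar>
        \<le> \<bar>fst (snd (Z s)) n\<bar> + \<bar>snd (snd (Z s)) n\<bar>"
  proof -
    have "\<bar>sin ?x * fst (snd (Z s)) n\<bar> \<le> \<bar>fst (snd (Z s)) n\<bar>"
      by (simp add: abs_mult mult_left_le_one_le)
    moreover have "\<bar>cos ?x * snd (snd (Z s)) n\<bar> \<le> \<bar>snd (snd (Z s)) n\<bar>"
      by (simp add: abs_mult mult_left_le_one_le)
    ultimately show ?thesis by (smt (verit))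
  qed
  also have "\<dots> \<le> \<bar>fst (snd y0) n\<bar> + \<bar>snd (snd y0) n\<bar> + 2 * sg a n * T"
    using U_bound[OF s0(1), of n] V_bound[OF s0(1), of n] mult_left_mono[OF s0(2) sgnn[of n]]
    by linarith
  finally have "real n * sg a n * \<bar>sin ?x * fst (snd (Z s)) n + cos ?x * snd (snd (Z s)) n\<bar>
      \<le> real n * sg a n * (\<bar>fst (snd y0) n\<bar> + \<bar>snd (snd y0) n\<bar> + 2 * sg a n * T)"
    by (intro mult_left_mono) (auto intro: sgnn mult_nonneg_nonneg)
  then show ?thesis
    unfolding term1_def rho0_def using sgnn[of n] by (simp add: abs_mult)
qed

lemma summable_rho0: "summable rho0"
  using sumrho unfolding rho0_def .

lemma summable_term: "s \<in> {0..T} \<Longrightarrow> summable (term1 a (Z s))"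
  by (rule summable_comparison_test'[OF summable_rho0, where N=0]) (auto intro: term_bound)

lemma g_cont: "continuous_on {0..T} (\<lambda>s. fx a (Z s))"
proof -
  have ul: "uniform_limit {0..T} (\<lambda>n s. \<Sum>i<n. term1 a (Z s) i) (\<lambda>s. \<Sum>i. term1 a (Z s) i) sequentially"
    by (rule Weierstrass_m_test[OF _ summable_rho0]) (auto intro: term_bound)
  have "continuous_on {0..T} (\<lambda>s. \<Sum>i<n. term1 a (Z s) i)" for n
    unfolding term1_def
    by (intro continuous_intros U_cont V_cont contX') auto
  then have "continuous_on {0..T} (\<lambda>s. \<Sum>i. term1 a (Z s) i)"
    by (intro uniform_limit_theorem[OF _ ul]) auto
  then show ?thesis unfolding fx_def .
qed

end



lemma sg_nonneg: "\<forall>n\<ge>1. a n > 0 \<Longrightarrow> 0 \<le> sg a n"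
  by (auto simp: sg_def Suc_le_eq less_imp_le)

lemma sg_sq: "\<forall>n\<ge>1. a n > 0 \<Longrightarrow> (sg a n)\<^sup>2 = (if n = 0 then 0 else a n)"
  by (auto simp: sg_def Suc_le_eq less_imp_le)

lemma S4:
  assumes apos: "\<forall>n\<ge>1. a n > 0"
    and asum: "summable (\<lambda>n. (1 + (real n)\<^sup>2) ^ 5 * (a n)\<^sup>2)"
  shows "summable (\<lambda>n. (real n)^4 * (sg a n)\<^sup>2)"
proof (rule summable_comparison_test'[where N=0])
  show "summable (\<lambda>n. (1 + (real n)\<^sup>2) ^ 5 * (a n)\<^sup>2 + inverse (real n ^ 2))"
    by (intro summable_add asum inverse_power_summable) auto
  fix n :: nat
  show "norm ((real n)^4 * (sg a n)\<^sup>2) \<le> (1 + (real n)\<^sup>2) ^ 5 * (a n)\<^sup>2 + inverse (real n ^ 2)"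
  proof (cases "n = 0")
    case True then show ?thesis by (simp add: sg_def)
  next
    case False
    then have n: "real n > 0" by simp
    have an: "a n > 0" using apos False by auto
    have sq: "(sg a n)\<^sup>2 = a n" using an False by (simp add: sg_def)
    have "0 \<le> (real n ^ 5 * a n - inverse (real n))\<^sup>2" by simp
    also have "\<dots> = (real n ^ 5)\<^sup>2 * (a n)\<^sup>2 - 2 * a n * (real n ^ 5 * inverse (real n)) + (inverse (real n))\<^sup>2"
      by (simp add: power2_diff power_mult_distrib algebra_simps)
    also have "real n ^ 5 * inverse (real n) = real n ^ 4"
      using n by (simp add: eval_nat_numeral field_simps)
    also have "(real n ^ 5)\<^sup>2 = real n ^ 10" by (simp flip: power_mult)
    also have "(inverse (real n))\<^sup>2 = inverse (real n ^ 2)" by (simp add: power_inverse)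
    finally have 1: "2 * (real n ^ 4 * a n) \<le> real n ^ 10 * (a n)\<^sup>2 + inverse (real n ^ 2)" by (simp add: mult.commute mult.left_commute)
    have "real n ^ 10 = ((real n)\<^sup>2) ^ 5" by (simp flip: power_mult)
    also have "\<dots> \<le> (1 + (real n)\<^sup>2) ^ 5" by (intro power_mono) auto
    finally have "real n ^ 10 * (a n)\<^sup>2 \<le> (1 + (real n)\<^sup>2) ^ 5 * (a n)\<^sup>2"
      by (intro mult_right_mono) auto
    moreover have "0 \<le> real n ^ 4 * a n" using an by simp
    ultimately show ?thesis using 1 sq by simp
  qed
qed

lemma Sk:
  assumes apos: "\<forall>n\<ge>1. a n > 0"
    and S4: "summable (\<lambda>n. (real n)^4 * (sg a n)\<^sup>2)" and k: "k \<le> 4"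
  shows "summable (\<lambda>n. (real n)^k * (sg a n)\<^sup>2)"
proof (rule summable_comparison_test'[OF S4, where N=1])
  fix n :: nat assume "1 \<le> n"
  then have "(real n)^k \<le> (real n)^4" using k by (intro power_increasing) auto
  then show "norm ((real n)^k * (sg a n)\<^sup>2) \<le> (real n)^4 * (sg a n)\<^sup>2"
    by (simp add: mult_right_mono)
qed

lemma amgm: "real n * s * \<bar>x\<bar> \<le> ((real n)^2 * s^2 + x^2) / 2"
proof -
  have "0 \<le> (real n * s - \<bar>x\<bar>)\<^sup>2" by simp
  then show ?thesis by (simp add: power2_eq_square algebra_simps)
qed

lemma amgm2: "(real n)^2 * s * \<bar>x\<bar> \<le> ((real n)^4 * s^2 + x^2) / 2"
proof -
  have "0 \<le> ((real n)^2 * s - \<bar>x\<bar>)\<^sup>2" by simp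
  moreover have "(real n)^4 = (real n)^2 * (real n)^2" by (simp flip: power_add)
  ultimately show ?thesis by (simp add: power2_eq_square algebra_simps)
qed

definition rho :: "(nat \<Rightarrow> real) \<Rightarrow> hpt \<Rightarrow> real \<Rightarrow> nat \<Rightarrow> real" where
  "rho a y T n = real n * sg a n * (\<bar>fst (snd y) n\<bar> + \<bar>snd (snd y) n\<bar> + 2 * sg a n * T)"

lemma summable_rho:
  assumes apos: "\<forall>n\<ge>1. a n > 0" and S4: "summable (\<lambda>n. (real n)^4 * (sg a n)\<^sup>2)"
    and yH: "inH y"
  shows "summable (rho a y T)" "summable (\<lambda>n. real n * rho a y T n)"
proof -
  note u = inH_D(1)[OF yH] and v = inH_D(2)[OF yH]
  have S2: "summable (\<lambda>n. (real n)^2 * (sg a n)\<^sup>2)" "summable (\<lambda>n. (real n)^1 * (sg a n)\<^sup>2)"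
    using Sk[OF apos S4, of 2] Sk[OF apos S4, of 1] by auto
  have e1: "rho a y T n = real n * sg a n * \<bar>fst (snd y) n\<bar> + real n * sg a n * \<bar>snd (snd y) n\<bar>
     + 2 * T * ((real n)^1 * (sg a n)\<^sup>2)" for n
    by (simp add: rho_def algebra_simps power2_eq_square)
  have s1: "summable (\<lambda>n. real n * sg a n * \<bar>fst (snd y) n\<bar>)"
    by (rule summable_comparison_test'[where N=0, OF summable_divide[where c=2, OF summable_add[OF S2(1) u]]])
       (use amgm in \<open>auto simp: abs_mult sg_nonneg[OF apos]\<close>)
  have s2: "summable (\<lambda>n. real n * sg a n * \<bar>snd (snd y) n\<bar>)"
    by (rule summable_comparison_test'[where N=0, OF summable_divide[where c=2, OF summable_add[OF S2(1) v]]])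
       (use amgm in \<open>auto simp: abs_mult sg_nonneg[OF apos]\<close>)
  show "summable (rho a y T)" unfolding e1
    by (intro summable_add s1 s2 summable_mult S2(2))
  have e2: "real n * rho a y T n = (real n)^2 * sg a n * \<bar>fst (snd y) n\<bar> + (real n)^2 * sg a n * \<bar>snd (snd y) n\<bar>
     + 2 * T * ((real n)^2 * (sg a n)\<^sup>2)" for n
    by (simp add: rho_def algebra_simps power2_eq_square)
  have s3: "summable (\<lambda>n. (real n)^2 * sg a n * \<bar>fst (snd y) n\<bar>)"
    by (rule summable_comparison_test'[where N=0, OF summable_divide[where c=2, OF summable_add[OF S4 u]]])
       (use amgm2 in \<open>auto simp: abs_mult sg_nonneg[OF apos]\<close>)
  have s4: "summable (\<lambda>n. (real n)^2 * sg a n * \<bar>snd (snd y) n\<bar>)"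
    by (rule summable_comparison_test'[where N=0, OF summable_divide[where c=2, OF summable_add[OF S4 v]]])
       (use amgm2 in \<open>auto simp: abs_mult sg_nonneg[OF apos]\<close>)
  show "summable (\<lambda>n. real n * rho a y T n)" unfolding e2
    by (intro summable_add s3 s4 summable_mult S2(1))
qed

lemma tail_summable: "summable (f::nat \<Rightarrow> real) \<Longrightarrow> summable (\<lambda>n. if N < n then f n else 0)"
proof -
  assume f: "summable f"
  have "summable (\<lambda>n. f n - (if n \<le> N then f n else 0))"
    by (intro summable_diff f summable_finite[of "{..N}"]) auto
  then show ?thesis by (rule summable_cong[THEN iffD1, rotated]) (auto intro!: always_eventually)
qed

lemma tail_tendsto: "summable (f::nat \<Rightarrow> real) \<Longrightarrow> (\<lambda>N. \<Sum>n. if N < n then f n else 0) \<longlonglongrightarrow> 0"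
proof -
  assume f: "summable f"
  have eq: "(\<Sum>n. if N < n then f n else 0) = suminf f - sum f {..N}" for N
  proof -
    have "(\<Sum>n. if n \<le> N then f n else 0) = sum f {..N}"
      by (subst suminf_finite[of "{..N}"]) auto
    moreover have "suminf f - (\<Sum>n. if n \<le> N then f n else 0) = (\<Sum>n. f n - (if n \<le> N then f n else 0))"
      by (intro suminf_diff f summable_finite[of "{..N}"]) auto
    moreover have "(\<lambda>n. f n - (if n \<le> N then f n else 0)) = (\<lambda>n. if N < n then f n else 0)"
      by auto
    ultimately show ?thesis by simp
  qed
  have "(\<lambda>N. sum f {..N}) \<longlonglongrightarrow> suminf f"
    using summable_LIMSEQ'[OF f] .
  then have "(\<lambda>N. suminf f - sum f {..N}) \<longlonglongrightarrow> suminf f - suminf f"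
    by (intro tendsto_diff tendsto_const)
  then show ?thesis by (simp add: eq)
qed



definition tl2 :: "(nat \<Rightarrow> real) \<Rightarrow> (nat \<Rightarrow> real) \<Rightarrow> real \<Rightarrow> nat \<Rightarrow> real" where
  "tl2 a u T N = (\<Sum>n. if N < n then 2 * (u n)\<^sup>2 + 2 * (sg a n)\<^sup>2 * T\<^sup>2 else 0)"

locale mainl =
  fixes a :: "nat \<Rightarrow> real" and beta :: "real \<Rightarrow> real" and y :: hpt
    and Y :: "real \<Rightarrow> hpt" and YN :: "real \<Rightarrow> hpt" and N :: nat and T :: real
  assumes apos: "\<forall>n\<ge>1. a n > 0"
    and S4: "summable (\<lambda>n. (real n)^4 * (sg a n)\<^sup>2)"
    and yH: "inH y"
    and Ysol: "is_solution (Fdrift a) beta y Y"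
    and YNsol: "is_solution (\<lambda>z. PiN N (Fdrift a z)) beta (PiN N y) YN"
    and Tpos: "T > 0"
begin

lemma sgnn: "0 \<le> sg a n" using sg_nonneg[OF apos] .

lemma rho_nn: "0 \<le> rho a y T n"
  unfolding rho_def using sgnn[of n] Tpos by (intro mult_nonneg_nonneg) auto

sublocale Yi: solz a "Fdrift a" beta y Y "\<lambda>_. True" T
proof
  show "summable (\<lambda>n. real n * sg a n * (\<bar>fst (snd y) n\<bar> + \<bar>snd (snd y) n\<bar> + 2 * sg a n * T))"
    using summable_rho(1)[OF apos S4 yH] unfolding rho_def .
qed (use Ysol Tpos sgnn in \<open>auto simp: fst_Fdrift u_Fdrift v_Fdrift\<close>)

sublocale YNi: solz a "\<lambda>z. PiN N (Fdrift a z)" beta "PiN N y" YN "\<lambda>n. n \<le> N" T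
proof
  show "summable (\<lambda>n. real n * sg a n * (\<bar>fst (snd (PiN N y)) n\<bar> + \<bar>snd (snd (PiN N y)) n\<bar> + 2 * sg a n * T))"
  proof (rule summable_comparison_test'[OF summable_rho(1)[OF apos S4 yH], where N=0])
    fix n :: nat
    have "\<bar>fst (snd (PiN N y)) n\<bar> \<le> \<bar>fst (snd y) n\<bar>" "\<bar>snd (snd (PiN N y)) n\<bar> \<le> \<bar>snd (snd y) n\<bar>"
      by (auto simp: u_PiN v_PiN)
    then have "real n * sg a n * (\<bar>fst (snd (PiN N y)) n\<bar> + \<bar>snd (snd (PiN N y)) n\<bar> + 2 * sg a n * T)
        \<le> rho a y T n"
      unfolding rho_def using sgnn[of n] by (intro mult_left_mono) auto
    moreover have "0 \<le> real n * sg a n * (\<bar>fst (snd (PiN N y)) n\<bar> + \<bar>snd (snd (PiN N y)) n\<bar> + 2 * sg a n * T)"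
      using sgnn[of n] Tpos by (intro mult_nonneg_nonneg) auto
    ultimately show "norm (real n * sg a n * (\<bar>fst (snd (PiN N y)) n\<bar> + \<bar>snd (snd (PiN N y)) n\<bar> + 2 * sg a n * T))
        \<le> rho a y T n" by simp
  qed
qed (use YNsol Tpos sgnn in \<open>auto simp: fst_Fdrift u_Fdrift v_Fdrift fst_PiN u_PiN v_PiN\<close>)

definition e where "e s = \<bar>fst (YN s) - fst (Y s)\<bar>"
definition J where "J s = integral {0..s} e"

lemma cont_e: "S \<subseteq> {0..} \<Longrightarrow> continuous_on S e"
  unfolding e_def by (intro continuous_intros Yi.contX' YNi.contX')

lemma int_e: "0 \<le> s \<Longrightarrow> e integrable_on {s..t}"
  by (rule integrable_continuous_interval, rule cont_e) auto

lemma e_nn: "0 \<le> e s" by (simp add: e_def)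

lemma J_nn: "0 \<le> s \<Longrightarrow> 0 \<le> J s"
  unfolding J_def by (rule integral_nonneg) (auto intro: e_nn int_e)

lemma dU:
  assumes s: "0 \<le> s" and n: "n \<le> N"
  shows "\<bar>fst (snd (YN s)) n - fst (snd (Y s)) n\<bar> \<le> real n * sg a n * J s"
proof -
  have "fst (snd (YN s)) n - fst (snd (Y s)) n = integral {0..s} (YNi.hU n) - integral {0..s} (Yi.hU n)"
    using YNi.U_eq[OF s, of n] Yi.U_eq[OF s, of n] n by (simp add: u_PiN)
  also have "\<dots> = integral {0..s} (\<lambda>r. YNi.hU n r - Yi.hU n r)"
    by (rule integral_diff[symmetric]) (auto intro: YNi.int_hU Yi.int_hU)
  finally have eq: "fst (snd (YN s)) n - fst (snd (Y s)) n = integral {0..s} (\<lambda>r. YNi.hU n r - Yi.hU n r)" .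
  have "norm (integral {0..s} (\<lambda>r. YNi.hU n r - Yi.hU n r)) \<le> integral {0..s} (\<lambda>r. real n * sg a n * e r)"
  proof (rule integral_norm_bound_integral)
    show "(\<lambda>r. YNi.hU n r - Yi.hU n r) integrable_on {0..s}"
      by (intro integrable_diff YNi.int_hU Yi.int_hU) auto
    show "(\<lambda>r. real n * sg a n * e r) integrable_on {0..s}"
      by (intro integrable_on_mult_right int_e) auto
    fix r assume "r \<in> {0..s}"
    have "\<bar>sg a n * cos (real n * fst (YN r)) - sg a n * cos (real n * fst (Y r))\<bar>
        = sg a n * \<bar>cos (real n * fst (YN r)) - cos (real n * fst (Y r))\<bar>"
      using sgnn[of n] by (simp add: abs_mult flip: right_diff_distrib)
    also have "\<dots> \<le> sg a n * (real n * e r)"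
      unfolding e_def by (intro mult_left_mono cos_lipn sgnn)
    finally show "norm (YNi.hU n r - Yi.hU n r) \<le> real n * sg a n * e r"
      using n by (simp add: YNi.hU_def Yi.hU_def mult_ac)
  qed
  also have "\<dots> = real n * sg a n * J s"
    unfolding J_def by simp
  finally show ?thesis using eq by simp
qed

lemma dV:
  assumes s: "0 \<le> s" and n: "n \<le> N"
  shows "\<bar>snd (snd (YN s)) n - snd (snd (Y s)) n\<bar> \<le> real n * sg a n * J s"
proof -
  have "snd (snd (YN s)) n - snd (snd (Y s)) n = integral {0..s} (YNi.hV n) - integral {0..s} (Yi.hV n)"
    using YNi.V_eq[OF s, of n] Yi.V_eq[OF s, of n] n by (simp add: v_PiN)
  also have "\<dots> = integral {0..s} (\<lambda>r. YNi.hV n r - Yi.hV n r)"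
    by (rule integral_diff[symmetric]) (auto intro: YNi.int_hV Yi.int_hV)
  finally have eq: "snd (snd (YN s)) n - snd (snd (Y s)) n = integral {0..s} (\<lambda>r. YNi.hV n r - Yi.hV n r)" .
  have "norm (integral {0..s} (\<lambda>r. YNi.hV n r - Yi.hV n r)) \<le> integral {0..s} (\<lambda>r. real n * sg a n * e r)"
  proof (rule integral_norm_bound_integral)
    show "(\<lambda>r. YNi.hV n r - Yi.hV n r) integrable_on {0..s}"
      by (intro integrable_diff YNi.int_hV Yi.int_hV) auto
    show "(\<lambda>r. real n * sg a n * e r) integrable_on {0..s}"
      by (intro integrable_on_mult_right int_e) auto
    fix r assume "r \<in> {0..s}"
    have "\<bar>- sg a n * sin (real n * fst (YN r)) - - sg a n * sin (real n * fst (Y r))\<bar>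
        = sg a n * \<bar>sin (real n * fst (YN r)) - sin (real n * fst (Y r))\<bar>"
      using sgnn[of n] by (simp add: abs_mult abs_minus_commute flip: right_diff_distrib)
    also have "\<dots> \<le> sg a n * (real n * e r)"
      unfolding e_def by (intro mult_left_mono sin_lipn sgnn)
    finally show "norm (YNi.hV n r - Yi.hV n r) \<le> real n * sg a n * e r"
      using n by (simp add: YNi.hV_def Yi.hV_def mult_ac)
  qed
  also have "\<dots> = real n * sg a n * J s"
    unfolding J_def by simp
  finally show ?thesis using eq by simp
qed

lemma UN_zero: "0 \<le> s \<Longrightarrow> N < n \<Longrightarrow> fst (snd (YN s)) n = 0"
proof -
  assume "0 \<le> s" "N < n"
  moreover have "YNi.hU n = (\<lambda>_. 0)" using \<open>N < n\<close> by (auto simp: fun_eq_iff YNi.hU_def)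
  ultimately show ?thesis using YNi.U_eq[of s n] by (simp add: u_PiN)
qed
lemma VN_zero: "0 \<le> s \<Longrightarrow> N < n \<Longrightarrow> snd (snd (YN s)) n = 0"
proof -
  assume "0 \<le> s" "N < n"
  moreover have "YNi.hV n = (\<lambda>_. 0)" using \<open>N < n\<close> by (auto simp: fun_eq_iff YNi.hV_def)
  ultimately show ?thesis using YNi.V_eq[of s n] by (simp add: v_PiN)
qed

lemma dterm:
  assumes s: "s \<in> {0..T}"
  shows "\<bar>term1 a (YN s) n - term1 a (Y s) n\<bar> \<le> real n * rho a y T n * e s
           + 2 * ((real n)\<^sup>2 * (sg a n)\<^sup>2) * J s + (if N < n then rho a y T n else 0)"
proof (cases "n \<le> N")
  case True
  have s0: "0 \<le> s" "s \<le> T" using s by auto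
  define A where "A = real n * fst (YN s)"
  define B where "B = real n * fst (Y s)"
  define p where "p = fst (snd (YN s)) n"
  define q where "q = fst (snd (Y s)) n"
  define p' where "p' = snd (snd (YN s)) n"
  define q' where "q' = snd (snd (Y s)) n"
  define w where "w = real n * sg a n"
  have w0: "0 \<le> w" unfolding w_def using sgnn[of n] by simp
  have sT: "sg a n * s \<le> sg a n * T" using s0 sgnn[of n] by (intro mult_left_mono) auto
  have bp: "\<bar>p\<bar> \<le> \<bar>fst (snd y) n\<bar> + sg a n * T"
    using YNi.U_bound[OF s0(1), of n] True sT unfolding p_def by (simp add: u_PiN)
  have bp': "\<bar>p'\<bar> \<le> \<bar>snd (snd y) n\<bar> + sg a n * T"
    using YNi.V_bound[OF s0(1), of n] True sT unfolding p'_def by (simp add: v_PiN)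
  have dp: "\<bar>p - q\<bar> \<le> w * J s" using dU[OF s0(1) True] unfolding p_def q_def w_def .
  have dp': "\<bar>p' - q'\<bar> \<le> w * J s" using dV[OF s0(1) True] unfolding p'_def q'_def w_def .
  have sA: "\<bar>sin A - sin B\<bar> \<le> real n * e s" unfolding A_def B_def e_def by (rule sin_lipn)
  have cA: "\<bar>cos A - cos B\<bar> \<le> real n * e s" unfolding A_def B_def e_def by (rule cos_lipn)
  have 1: "\<bar>sin A * p - sin B * q\<bar> \<le> real n * e s * (\<bar>fst (snd y) n\<bar> + sg a n * T) + w * J s"
  proof -
    have "sin A * p - sin B * q = (sin A - sin B) * p + sin B * (p - q)" by (simp add: algebra_simps)
    then have "\<bar>sin A * p - sin B * q\<bar> \<le> \<bar>sin A - sin B\<bar> * \<bar>p\<bar> + \<bar>sin B\<bar> * \<bar>p - q\<bar>"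
      by (simp add: abs_mult[symmetric] abs_triangle_ineq)
    also have "\<bar>sin B\<bar> * \<bar>p - q\<bar> \<le> \<bar>p - q\<bar>" by (simp add: mult_left_le_one_le)
    also have "\<bar>sin A - sin B\<bar> * \<bar>p\<bar> \<le> real n * e s * (\<bar>fst (snd y) n\<bar> + sg a n * T)"
      by (intro mult_mono sA bp) (auto simp: e_nn)
    finally show ?thesis using dp by linarith
  qed
  have 2: "\<bar>cos A * p' - cos B * q'\<bar> \<le> real n * e s * (\<bar>snd (snd y) n\<bar> + sg a n * T) + w * J s"
  proof -
    have "cos A * p' - cos B * q' = (cos A - cos B) * p' + cos B * (p' - q')" by (simp add: algebra_simps)
    then have "\<bar>cos A * p' - cos B * q'\<bar> \<le> \<bar>cos A - cos B\<bar> * \<bar>p'\<bar> + \<bar>cos B\<bar> * \<bar>p' - q'\<bar>"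
      by (simp add: abs_mult[symmetric] abs_triangle_ineq)
    also have "\<bar>cos B\<bar> * \<bar>p' - q'\<bar> \<le> \<bar>p' - q'\<bar>" by (simp add: mult_left_le_one_le)
    also have "\<bar>cos A - cos B\<bar> * \<bar>p'\<bar> \<le> real n * e s * (\<bar>snd (snd y) n\<bar> + sg a n * T)"
      by (intro mult_mono cA bp') (auto simp: e_nn)
    finally show ?thesis using dp' by linarith
  qed
  have eqt: "term1 a (YN s) n - term1 a (Y s) n = w * ((sin A * p - sin B * q) + (cos A * p' - cos B * q'))"
    unfolding term1_def A_def B_def p_def q_def p'_def q'_def w_def by (simp add: algebra_simps)
  have "\<bar>(sin A * p - sin B * q) + (cos A * p' - cos B * q')\<bar>
      \<le> real n * e s * (\<bar>fst (snd y) n\<bar> + sg a n * T) + w * J s + (real n * e s * (\<bar>snd (snd y) n\<bar> + sg a n * T) + w * J s)"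
    using 1 2 by linarith
  then have "\<bar>term1 a (YN s) n - term1 a (Y s) n\<bar>
      \<le> w * (real n * e s * (\<bar>fst (snd y) n\<bar> + sg a n * T) + w * J s + (real n * e s * (\<bar>snd (snd y) n\<bar> + sg a n * T) + w * J s))"
    unfolding eqt abs_mult using w0 by (simp add: mult_left_mono)
  also have "\<dots> = real n * rho a y T n * e s + 2 * ((real n)\<^sup>2 * (sg a n)\<^sup>2) * J s"
    unfolding w_def rho_def by (simp add: algebra_simps power2_eq_square)
  finally show ?thesis using True by simp
next
  case False
  then have Nn: "N < n" by simp
  have s0: "0 \<le> s" using s by auto
  have "term1 a (YN s) n = 0" unfolding term1_def using UN_zero[OF s0 Nn] VN_zero[OF s0 Nn] by simp
  then have "\<bar>term1 a (YN s) n - term1 a (Y s) n\<bar> \<le> rho a y T n"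
    using Yi.term_bound[OF s, of n] by (simp add: Yi.rho0_def rho_def)
  moreover have "0 \<le> real n * rho a y T n * e s" using rho_nn[of n] e_nn[of s] by simp
  moreover have "0 \<le> 2 * ((real n)\<^sup>2 * (sg a n)\<^sup>2) * J s" using J_nn[OF s0] by simp
  ultimately show ?thesis using Nn by (simp only: if_True)
qed

definition C1 where "C1 = (\<Sum>n. real n * rho a y T n)"
definition S2 where "S2 = (\<Sum>n. (real n)\<^sup>2 * (sg a n)\<^sup>2)"
definition rN where "rN = (\<Sum>n. if N < n then rho a y T n else 0)"

lemma sum_C1: "summable (\<lambda>n. real n * rho a y T n)"
  using summable_rho(2)[OF apos S4 yH] .
lemma sum_S2: "summable (\<lambda>n. (real n)\<^sup>2 * (sg a n)\<^sup>2)"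
  using Sk[OF apos S4, of 2] by simp
lemma sum_rN: "summable (\<lambda>n. if N < n then rho a y T n else 0)"
  using tail_summable summable_rho(1)[OF apos S4 yH] by blast

lemma C1_nn: "0 \<le> C1" unfolding C1_def using sum_C1 rho_nn by (intro suminf_nonneg) auto
lemma S2_nn: "0 \<le> S2" unfolding S2_def using sum_S2 by (intro suminf_nonneg) auto
lemma rN_nn: "0 \<le> rN" unfolding rN_def using sum_rN rho_nn by (intro suminf_nonneg) auto

lemma dfx:
  assumes s: "s \<in> {0..T}"
  shows "\<bar>fx a (YN s) - fx a (Y s)\<bar> \<le> C1 * e s + 2 * S2 * J s + rN"
proof -
  define bd where "bd n = real n * rho a y T n * e s
           + 2 * ((real n)\<^sup>2 * (sg a n)\<^sup>2) * J s + (if N < n then rho a y T n else 0)" for n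
  have bds: "bd sums (C1 * e s + 2 * S2 * J s + rN)"
    unfolding bd_def
    by (intro sums_add sums_mult2 sums_mult summable_sums[OF sum_C1, folded C1_def]
          summable_sums[OF sum_S2, folded S2_def] summable_sums[OF sum_rN, folded rN_def])
  have d: "\<bar>term1 a (YN s) n - term1 a (Y s) n\<bar> \<le> bd n" for n
    unfolding bd_def by (rule dterm[OF s])
  have sd: "summable (\<lambda>n. \<bar>term1 a (YN s) n - term1 a (Y s) n\<bar>)"
    by (rule summable_comparison_test'[OF sums_summable[OF bds], where N=0]) (use d in auto)
  have "fx a (YN s) - fx a (Y s) = (\<Sum>n. term1 a (YN s) n - term1 a (Y s) n)"
    unfolding fx_def by (intro suminf_diff YNi.summable_term Yi.summable_term s)
  also have "\<bar>\<dots>\<bar> \<le> (\<Sum>n. \<bar>term1 a (YN s) n - term1 a (Y s) n\<bar>)"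
    by (rule summable_rabs[OF sd])
  also have "\<dots> \<le> C1 * e s + 2 * S2 * J s + rN"
    by (rule sums_le[OF _ summable_sums[OF sd] bds]) (use d in auto)
  finally show ?thesis .
qed

lemma exp_int:
  assumes K: "(K::real) > 0" and s: "0 \<le> s"
  shows "((\<lambda>r. exp (2 * K * r)) has_integral (exp (2 * K * s) - 1) / (2 * K)) {0..s}"
proof -
  have "((\<lambda>r. exp (2 * K * r)) has_integral (exp (2 * K * s) / (2 * K) - exp (2 * K * 0) / (2 * K))) {0..s}"
  proof (rule fundamental_theorem_of_calculus[OF s])
    fix x :: real assume "x \<in> {0..s}"
    have "((\<lambda>r. exp (2 * K * r) / (2 * K)) has_real_derivative exp (2 * K * x)) (at x within {0..s})"
      using K by (auto intro!: derivative_eq_intros)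
    then show "((\<lambda>r. exp (2 * K * r) / (2 * K)) has_vector_derivative exp (2 * K * x)) (at x within {0..s})"
      by (simp add: has_real_derivative_iff_has_vector_derivative)
  qed
  then show ?thesis by (simp add: diff_divide_distrib)
qed

definition K where "K = C1 + 2 * S2 + 1"

lemma K_ge1: "1 \<le> K" unfolding K_def using C1_nn S2_nn by simp

lemma int_g: "t \<in> {0..T} \<Longrightarrow> (\<lambda>s. fx a (YN s)) integrable_on {0..t}" "t \<in> {0..T} \<Longrightarrow> (\<lambda>s. fx a (Y s)) integrable_on {0..t}"
  by (auto intro!: integrable_continuous_interval continuous_on_subset[OF YNi.g_cont] continuous_on_subset[OF Yi.g_cont])

lemma e_eq: assumes t: "t \<in> {0..T}"
  shows "e t = \<bar>integral {0..t} (\<lambda>s. fx a (YN s) - fx a (Y s))\<bar>"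
proof -
  have t0: "0 \<le> t" using t by auto
  have "fst (YN t) - fst (Y t) = integral {0..t} (\<lambda>s. fx a (YN s)) - integral {0..t} (\<lambda>s. fx a (Y s))"
    using YNi.X_eq[OF t0] Yi.X_eq[OF t0] by (simp add: fst_PiN)
  also have "\<dots> = integral {0..t} (\<lambda>s. fx a (YN s) - fx a (Y s))"
    by (rule integral_diff[symmetric]) (use int_g[OF t] in auto)
  finally show ?thesis unfolding e_def by simp
qed

lemma e_bound: "t \<in> {0..T} \<Longrightarrow> e t \<le> 2 * T * rN * exp (2 * K * T)"
proof -
  define w where "w t = e t * exp (- (2 * K * t))" for t
  have wc: "continuous_on {0..T} w" unfolding w_def
    by (intro continuous_intros cont_e) auto
  obtain t0 where t0: "t0 \<in> {0..T}" and wmax: "\<And>t. t \<in> {0..T} \<Longrightarrow> w t \<le> w t0"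
    using continuous_attains_sup[OF compact_Icc _ wc] Tpos by fastforce
  define m where "m = w t0"
  have m0: "0 \<le> m" unfolding m_def w_def using e_nn by simp
  have K0: "0 < K" using K_ge1 by simp
  have em: "e t \<le> m * exp (2 * K * t)" if t: "t \<in> {0..T}" for t
  proof -
    have "e t = w t * exp (2 * K * t)" unfolding w_def by (simp add: mult.assoc flip: exp_add)
    also have "\<dots> \<le> m * exp (2 * K * t)" using wmax[OF t] unfolding m_def by (intro mult_right_mono) auto
    finally show ?thesis .
  qed
  have Jm: "J t \<le> m * ((exp (2 * K * t) - 1) / (2 * K))" if t: "t \<in> {0..T}" for t
  proof -
    have hi: "((\<lambda>r. m * exp (2 * K * r)) has_integral m * ((exp (2 * K * t) - 1) / (2 * K))) {0..t}"
      using exp_int[OF K0, of t] t by (intro has_integral_mult_right) auto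
    have "J t \<le> integral {0..t} (\<lambda>r. m * exp (2 * K * r))"
      unfolding J_def
      by (rule integral_le) (use int_e t hi em in \<open>auto intro: has_integral_integrable\<close>)
    also have "\<dots> = m * ((exp (2 * K * t) - 1) / (2 * K))" using hi by (rule integral_unique)
    finally show ?thesis .
  qed
  define c where "c = C1 + 2 * S2 / (2 * K)"
  have c0: "0 \<le> c" unfolding c_def using C1_nn S2_nn K0 by simp
  have cK: "c \<le> K"
  proof -
    have "S2 * 1 \<le> S2 * K" by (rule mult_left_mono[OF K_ge1 S2_nn])
    then have "2 * S2 / (2 * K) \<le> 2 * S2" using S2_nn K_ge1 by (simp add: divide_le_eq mult_ac)
    then show ?thesis unfolding c_def K_def by simp
  qed
  have hb: "\<bar>fx a (YN r) - fx a (Y r)\<bar> \<le> c * m * exp (2 * K * r) + rN" if r: "r \<in> {0..T}" for r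
  proof -
    have E1: "0 \<le> exp (2 * K * r)" by simp
    have "C1 * e r \<le> C1 * (m * exp (2 * K * r))" using em[OF r] C1_nn by (rule mult_left_mono)
    moreover have "2 * S2 * J r \<le> 2 * S2 * (m * ((exp (2 * K * r) - 1) / (2 * K)))"
      using Jm[OF r] S2_nn by (intro mult_left_mono) auto
    moreover have "m * ((exp (2 * K * r) - 1) / (2 * K)) \<le> m * (exp (2 * K * r) / (2 * K))"
      using m0 K0 by (intro mult_left_mono divide_right_mono) auto
    moreover have "2 * S2 * (m * (exp (2 * K * r) / (2 * K))) = 2 * S2 / (2 * K) * m * exp (2 * K * r)"
      by simp
    moreover have "2 * S2 * (m * ((exp (2 * K * r) - 1) / (2 * K))) \<le> 2 * S2 * (m * (exp (2 * K * r) / (2 * K)))"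
      using S2_nn by (intro mult_left_mono[OF calculation(3)]) simp
    ultimately have "C1 * e r + 2 * S2 * J r + rN \<le> c * m * exp (2 * K * r) + rN"
      unfolding c_def by (simp add: algebra_simps)
    then show ?thesis using dfx[OF r] by linarith
  qed
  have wb: "w t \<le> m / 2 + rN * T" if t: "t \<in> {0..T}" for t
  proof -
    have t0': "0 \<le> t" "t \<le> T" using t by auto
    define E where "E = exp (2 * K * t)"
    have E1: "1 \<le> E" unfolding E_def using K0 t0' by simp
    have hi: "((\<lambda>r. c * m * exp (2 * K * r) + rN) has_integral (c * m * ((E - 1) / (2 * K)) + rN * t)) {0..t}"
    proof -
      have "((\<lambda>r. c * m * exp (2 * K * r)) has_integral c * m * ((E - 1) / (2 * K))) {0..t}"
        unfolding E_def using exp_int[OF K0 t0'(1)] by (intro has_integral_mult_right)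
      moreover have "((\<lambda>r. rN) has_integral rN * t) {0..t}"
        using has_integral_const_real[of rN 0 t] t0' by (simp add: mult.commute)
      ultimately show ?thesis by (rule has_integral_add)
    qed
    have "e t \<le> integral {0..t} (\<lambda>r. c * m * exp (2 * K * r) + rN)"
      unfolding e_eq[OF t]
    proof -
      have "norm (integral {0..t} (\<lambda>s. fx a (YN s) - fx a (Y s))) \<le> integral {0..t} (\<lambda>r. c * m * exp (2 * K * r) + rN)"
      proof (rule integral_norm_bound_integral)
        show "(\<lambda>s. fx a (YN s) - fx a (Y s)) integrable_on {0..t}"
          using int_g[OF t] by (rule integrable_diff)
        show "(\<lambda>r. c * m * exp (2 * K * r) + rN) integrable_on {0..t}"
          using hi by (rule has_integral_integrable)
        fix r assume "r \<in> {0..t}"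
        then show "norm (fx a (YN r) - fx a (Y r)) \<le> c * m * exp (2 * K * r) + rN"
          using hb t0' by auto
      qed
      then show "\<bar>integral {0..t} (\<lambda>s. fx a (YN s) - fx a (Y s))\<bar> \<le> integral {0..t} (\<lambda>r. c * m * exp (2 * K * r) + rN)"
        by simp
    qed
    also have "\<dots> = c * m * ((E - 1) / (2 * K)) + rN * t" using hi by (rule integral_unique)
    also have "c * m * ((E - 1) / (2 * K)) \<le> K * m * (E / (2 * K))"
      using c0 cK m0 K0 E1 by (intro mult_mono divide_right_mono) auto
    also have "K * m * (E / (2 * K)) = m * E / 2" using K0 by simp
    also have "rN * t \<le> rN * T" using rN_nn t0' by (intro mult_left_mono) auto
    finally have et: "e t \<le> m * E / 2 + rN * T" by simp
    have "w t = e t / E" unfolding w_def E_def by (simp add: exp_minus divide_inverse)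
    also have "\<dots> \<le> (m * E / 2 + rN * T) / E" using et E1 by (intro divide_right_mono) auto
    also have "\<dots> = m / 2 + rN * T / E" using E1 by (simp add: field_simps)
    also have "rN * T / E \<le> rN * T" using divide_left_mono[OF E1, of "rN * T"] E1 rN_nn Tpos by simp
    finally show ?thesis by simp
  qed
  have "m \<le> 2 * rN * T" using wb[OF t0] unfolding m_def by simp
  then show "t \<in> {0..T} \<Longrightarrow> e t \<le> 2 * T * rN * exp (2 * K * T)"
  proof -
    assume t: "t \<in> {0..T}" and mb: "m \<le> 2 * rN * T"
    have "e t \<le> m * exp (2 * K * t)" by (rule em[OF t])
    also have "\<dots> \<le> (2 * rN * T) * exp (2 * K * T)"
      using mb t K0 m0 rN_nn by (intro mult_mono) auto
    finally show ?thesis by (simp add: mult_ac)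
  qed
qed


lemma sum_tl2: "summable (\<lambda>n. (u n)\<^sup>2) \<Longrightarrow> summable (\<lambda>n. if N < n then 2 * (u n)\<^sup>2 + 2 * (sg a n)\<^sup>2 * T\<^sup>2 else 0)"
  by (intro tail_summable summable_add summable_mult summable_mult2 Sk[OF apos S4, of 0, simplified]) auto

lemma J_bound: assumes t: "t \<in> {0..T}" shows "J t \<le> T * (2 * T * rN * exp (2 * K * T))"
proof -
  define d where "d = 2 * T * rN * exp (2 * K * T)"
  have d0: "0 \<le> d" unfolding d_def using Tpos rN_nn by simp
  have "J t \<le> integral {0..t} (\<lambda>_. d)"
    unfolding J_def by (rule integral_le) (use int_e t e_bound in \<open>auto simp: d_def\<close>)
  also have "\<dots> = t * d" using t by simp
  also have "\<dots> \<le> T * d" using t d0 by (intro mult_right_mono) auto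
  finally show ?thesis unfolding d_def .
qed

lemma sq_le: "\<bar>x::real\<bar> \<le> b \<Longrightarrow> x\<^sup>2 \<le> b\<^sup>2"
  by (metis abs_ge_zero abs_le_square_iff order.trans abs_of_nonneg)

lemma comp_bound:
  assumes t: "t \<in> {0..T}"
    and dd: "\<And>n. n \<le> N \<Longrightarrow> \<bar>p n - q n\<bar> \<le> real n * sg a n * J t"
    and pz: "\<And>n. N < n \<Longrightarrow> p n = 0"
    and qb: "\<And>n. \<bar>q n\<bar> \<le> \<bar>u n\<bar> + sg a n * t"
  shows "(p n - q n)\<^sup>2 \<le> (real n)\<^sup>2 * (sg a n)\<^sup>2 * (T * (2 * T * rN * exp (2 * K * T)))\<^sup>2
            + (if N < n then 2 * (u n)\<^sup>2 + 2 * (sg a n)\<^sup>2 * T\<^sup>2 else 0)"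
proof (cases "n \<le> N")
  case True
  have t0: "0 \<le> t" using t by auto
  have "\<bar>p n - q n\<bar> \<le> real n * sg a n * (T * (2 * T * rN * exp (2 * K * T)))"
    using dd[OF True] J_bound[OF t] sgnn[of n] by (smt (verit) mult_left_mono of_nat_0_le_iff mult_nonneg_nonneg)
  from sq_le[OF this] True show ?thesis by (simp add: power_mult_distrib)
next
  case False
  have t0: "0 \<le> t" "t \<le> T" using t by auto
  have "\<bar>q n\<bar> \<le> \<bar>u n\<bar> + sg a n * T"
    using qb[of n] mult_left_mono[OF t0(2) sgnn[of n]] by linarith
  then have "(q n)\<^sup>2 \<le> (\<bar>u n\<bar> + sg a n * T)\<^sup>2" by (rule sq_le)
  also have "\<dots> \<le> 2 * (u n)\<^sup>2 + 2 * (sg a n)\<^sup>2 * T\<^sup>2"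
  proof -
    have "0 \<le> (\<bar>u n\<bar> - sg a n * T)\<^sup>2" by simp
    then show ?thesis by (simp add: power2_eq_square algebra_simps)
  qed
  finally have "(q n)\<^sup>2 \<le> 2 * (u n)\<^sup>2 + 2 * (sg a n)\<^sup>2 * T\<^sup>2" .
  moreover have "0 \<le> (real n)\<^sup>2 * (sg a n)\<^sup>2 * (T * (2 * T * rN * exp (2 * K * T)))\<^sup>2" by simp
  moreover have e1: "(p n - q n)\<^sup>2 = (q n)\<^sup>2" using False pz[of n] by simp
  moreover have e2: "(if N < n then 2 * (u n)\<^sup>2 + 2 * (sg a n)\<^sup>2 * T\<^sup>2 else 0) = 2 * (u n)\<^sup>2 + 2 * (sg a n)\<^sup>2 * T\<^sup>2"
    using False by simp
  ultimately show ?thesis by linarith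
qed

lemma hbound:
  assumes t: "t \<in> {0..T}"
  shows "hnorm2 (hsub (YN t) (Y t)) \<le> (2 * T * rN * exp (2 * K * T))\<^sup>2
     + 2 * ((T * (2 * T * rN * exp (2 * K * T)))\<^sup>2 * S2) + tl2 a (\<lambda>n. fst (snd y) n) T N + tl2 a (\<lambda>n. snd (snd y) n) T N"
proof -
  define d where "d = 2 * T * rN * exp (2 * K * T)"
  have t0: "0 \<le> t" using t by auto
  have H: "inH (YN t)" "inH (Y t)" using YNsol Ysol t0 by (auto simp: is_solution_def)
  note hs = hnorm2_sub[OF H]
  have ex: "(fst (YN t) - fst (Y t))\<^sup>2 \<le> d\<^sup>2"
    using e_bound[OF t] unfolding e_def d_def by (rule sq_le)
  have gen: "(\<Sum>n. (p n - q n)\<^sup>2) \<le> (T * d)\<^sup>2 * S2 + tl2 a u T N"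
    if sm: "summable (\<lambda>n. (p n - q n)\<^sup>2)" and su: "summable (\<lambda>n. (u n)\<^sup>2)"
      and dd: "\<And>n. n \<le> N \<Longrightarrow> \<bar>p n - q n\<bar> \<le> real n * sg a n * J t"
      and pz: "\<And>n. N < n \<Longrightarrow> p n = 0"
      and qb: "\<And>n. \<bar>q n\<bar> \<le> \<bar>u n\<bar> + sg a n * t" for p q u
  proof -
    have bs: "(\<lambda>n. (real n)\<^sup>2 * (sg a n)\<^sup>2 * (T * d)\<^sup>2
            + (if N < n then 2 * (u n)\<^sup>2 + 2 * (sg a n)\<^sup>2 * T\<^sup>2 else 0)) sums ((T * d)\<^sup>2 * S2 + tl2 a u T N)"
    proof -
      have "(\<lambda>n. (real n)\<^sup>2 * (sg a n)\<^sup>2 * (T * d)\<^sup>2) sums (S2 * (T * d)\<^sup>2)"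
        by (rule sums_mult2[OF summable_sums[OF sum_S2, folded S2_def]])
      moreover have "(\<lambda>n. if N < n then 2 * (u n)\<^sup>2 + 2 * (sg a n)\<^sup>2 * T\<^sup>2 else 0) sums tl2 a u T N"
        unfolding tl2_def by (rule summable_sums[OF sum_tl2[OF su]])
      ultimately show ?thesis by (simp add: mult.commute sums_add)
    qed
    show ?thesis
      by (rule sums_le[OF _ summable_sums[OF sm] bs])
         (use comp_bound[OF t dd pz qb] in \<open>simp add: d_def\<close>)
  qed
  have gu: "(\<Sum>n. (fst (snd (YN t)) n - fst (snd (Y t)) n)\<^sup>2) \<le> (T * d)\<^sup>2 * S2 + tl2 a (\<lambda>n. fst (snd y) n) T N"
    by (rule gen[OF hs(2) inH_D(1)[OF yH]]) (use dU t0 UN_zero Yi.U_bound[OF t0] in auto)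
  have gv: "(\<Sum>n. (snd (snd (YN t)) n - snd (snd (Y t)) n)\<^sup>2) \<le> (T * d)\<^sup>2 * S2 + tl2 a (\<lambda>n. snd (snd y) n) T N"
    by (rule gen[OF hs(3) inH_D(2)[OF yH]]) (use dV t0 VN_zero Yi.V_bound[OF t0] in auto)
  show ?thesis unfolding hs(1) using ex gu gv unfolding d_def by linarith
qed

end



theorem lemma1:
  fixes a :: "nat \<Rightarrow> real" and beta :: "real \<Rightarrow> real" and y :: hpt
    and Y :: "real \<Rightarrow> hpt" and YN :: "nat \<Rightarrow> real \<Rightarrow> hpt" and T :: real
  assumes apos: "\<forall>n\<ge>1. a n > 0"
    and asum: "summable (\<lambda>n. (1 + (real n)\<^sup>2) ^ 5 * (a n)\<^sup>2)"
    and beta_cont: "continuous_on {0..} beta" and beta0: "beta 0 = 0"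
    and yH: "inH y"
    and Ysol: "is_solution (Fdrift a) beta y Y"
    and YNsol: "\<forall>N\<ge>1. is_solution (\<lambda>z. PiN N (Fdrift a z)) beta (PiN N y) (YN N)"
    and Tpos: "T > 0"
  shows "(\<lambda>N. SUP t\<in>{0..T}. hnorm2 (hsub (YN N t) (Y t))) \<longlonglongrightarrow> 0"
proof -
  have S4: "summable (\<lambda>n. (real n)^4 * (sg a n)\<^sup>2)" by (rule S4[OF apos asum])
  define rr where "rr N = (\<Sum>n. if N < n then rho a y T n else 0)" for N
  define KK where "KK = mainl.K a y T"
  define SS where "SS = mainl.S2 a"
  define B where "B N = (2 * T * rr N * exp (2 * KK * T))\<^sup>2
     + 2 * ((T * (2 * T * rr N * exp (2 * KK * T)))\<^sup>2 * SS) + tl2 a (fst (snd y)) T N + tl2 a (snd (snd y)) T N" for N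
  have M: "mainl a beta y Y (YN N) N T" if "N \<ge> 1" for N
    using apos S4 yH Ysol YNsol Tpos that by unfold_locales auto
  have bnd: "0 \<le> hnorm2 (hsub (YN N t) (Y t)) \<and> hnorm2 (hsub (YN N t) (Y t)) \<le> B N"
    if N: "N \<ge> 1" and t: "t \<in> {0..T}" for N t
  proof
    have "inH (YN N t)" "inH (Y t)" using YNsol Ysol N t by (auto simp: is_solution_def)
    then show "0 \<le> hnorm2 (hsub (YN N t) (Y t))" by (rule hnorm2_sub(5))
    show "hnorm2 (hsub (YN N t) (Y t)) \<le> B N"
      using mainl.hbound[OF M[OF N] t] unfolding B_def rr_def KK_def SS_def mainl.rN_def[OF M[OF N]] .
  qed
  have supb: "0 \<le> (SUP t\<in>{0..T}. hnorm2 (hsub (YN N t) (Y t))) \<and> (SUP t\<in>{0..T}. hnorm2 (hsub (YN N t) (Y t))) \<le> B N"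
    if N: "N \<ge> 1" for N
  proof
    have bdd: "bdd_above ((\<lambda>t. hnorm2 (hsub (YN N t) (Y t))) ` {0..T})"
      using bnd[OF N] by (intro bdd_aboveI2[where M="B N"]) auto
    have "0 \<le> hnorm2 (hsub (YN N 0) (Y 0))" using bnd[OF N, of 0] Tpos by auto
    also have "\<dots> \<le> (SUP t\<in>{0..T}. hnorm2 (hsub (YN N t) (Y t)))"
      using Tpos by (intro cSUP_upper bdd) auto
    finally show "0 \<le> (SUP t\<in>{0..T}. hnorm2 (hsub (YN N t) (Y t)))" .
    show "(SUP t\<in>{0..T}. hnorm2 (hsub (YN N t) (Y t))) \<le> B N"
      using Tpos bnd[OF N] by (intro cSUP_least) auto
  qed
  have sumw: "summable (\<lambda>n. 2 * (u n)\<^sup>2 + 2 * (sg a n)\<^sup>2 * T\<^sup>2)" if "summable (\<lambda>n. (u n)\<^sup>2)" for u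
    by (intro summable_add summable_mult summable_mult2 that Sk[OF apos S4, of 0, simplified])
  have rr0: "rr \<longlonglongrightarrow> 0"
    unfolding rr_def by (rule tail_tendsto[OF summable_rho(1)[OF apos S4 yH]])
  have t1: "(\<lambda>N. tl2 a (fst (snd y)) T N) \<longlonglongrightarrow> 0"
    unfolding tl2_def by (rule tail_tendsto[OF sumw[OF inH_D(1)[OF yH]]])
  have t2: "(\<lambda>N. tl2 a (snd (snd y)) T N) \<longlonglongrightarrow> 0"
    unfolding tl2_def by (rule tail_tendsto[OF sumw[OF inH_D(2)[OF yH]]])
  have "B \<longlonglongrightarrow> (2 * T * 0 * exp (2 * KK * T))\<^sup>2
     + 2 * ((T * (2 * T * 0 * exp (2 * KK * T)))\<^sup>2 * SS) + 0 + 0"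
    unfolding B_def[abs_def] by (intro tendsto_intros rr0 t1 t2)
  then have B0: "B \<longlonglongrightarrow> 0" by simp
  show ?thesis
  proof (rule tendsto_sandwich[OF _ _ tendsto_const B0])
    show "\<forall>\<^sub>F N in sequentially. 0 \<le> (SUP t\<in>{0..T}. hnorm2 (hsub (YN N t) (Y t)))"
      using supb unfolding eventually_sequentially by blast
    show "\<forall>\<^sub>F N in sequentially. (SUP t\<in>{0..T}. hnorm2 (hsub (YN N t) (Y t))) \<le> B N"
      using supb unfolding eventually_sequentially by blast
  qed
qed

end
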